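(* Let $Q$ be a right Leibniz algebra, $L$ a subalgebra of $Q$, and $q\in Q$. (1) If $Q$ is an algebra of quotients of $L$, then $(L:q)$ is an essential ideal of $L$ and $\mathrm{Ann}_L((L:q))=\{0\}$. (2) If $Q$ is ideally absorbed into $L$, then $(L:q)$ is an essential ideal of $L$ and $\mathrm{Ann}_L((L:q))=\{0\}$.
   Context: A right Leibniz algebra satisfies $[x,[y,z]]=[[x,y],z]-[[x,z],y]$. Ideals: subspaces $I$ with $[I,L]\subseteq I$, $[L,I]\subseteq I$; an ideal is essential if it meets every nonzero ideal nontrivially. $\mathrm{Ann}_L(H)=\{x\in L:[x,y]=[y,x]=0\ \forall y\in H\}$. For $x\in L$, $R_x(u)=[u,x]$, $L_x(u)=[x,u]$ on $Q$, $\mathscr{A}(L)$ the associative algebra they generate, ${}_L(q)=\mathbb{F}q+\{\sum\xi_i(q):\xi_i\in\mathscr{A}(L)\}$, $(L:q)=\{x\in L:[x,{}_L(q)]\subseteq L,[{}_L(q),x]\subseteq L\}$. $Q$ is an algebra of quotients of $L$ if for all $p,q\in Q$, $p\ne0$, there is $x\in(L:q)$ with $[x,p]\ne0$ or $y\in(L:q)$ with $[p,y]\ne0$. $Q$ is ideally absorbed into $L$ if for each $0\ne q\in Q$ there is an ideal $I$ of $L$ with $\mathrm{Ann}_L(I)=\{0\}$ such that $[I,q]\ne\{0\}$ or $[q,I]\ne\{0\}$, and both $[I,q],[q,I]\subseteq L$. *)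

theory Defs
  imports Main "HOL.Vector_Spaces"
begin

text \<open>The whole algebra Q is UNIV of type 'v.\<close>

definition right_leibniz_algebra ::
  "('k::field \<Rightarrow> 'v::ab_group_add \<Rightarrow> 'v) \<Rightarrow> ('v \<Rightarrow> 'v \<Rightarrow> 'v) \<Rightarrow> bool" where
  "right_leibniz_algebra scale br \<longleftrightarrow>
     vector_space scale \<and>
     (\<forall>x y z. br (x + y) z = br x z + br y z) \<and>
     (\<forall>x y z. br x (y + z) = br x y + br x z) \<and>
     (\<forall>c x y. br (scale c x) y = scale c (br x y)) \<and>
     (\<forall>c x y. br x (scale c y) = scale c (br x y)) \<and>
     (\<forall>x y z. br x (br y z) = br (br x y) z - br (br x z) y)"

definition subalgebra ::
  "('k::field \<Rightarrow> 'v::ab_group_add \<Rightarrow> 'v) \<Rightarrow> ('v \<Rightarrow> 'v \<Rightarrow> 'v) \<Rightarrow> 'v set \<Rightarrow> bool" where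
  "subalgebra scale br L \<longleftrightarrow>
     module.subspace scale L \<and> (\<forall>x\<in>L. \<forall>y\<in>L. br x y \<in> L)"

definition is_ideal ::
  "('k::field \<Rightarrow> 'v::ab_group_add \<Rightarrow> 'v) \<Rightarrow> ('v \<Rightarrow> 'v \<Rightarrow> 'v) \<Rightarrow> 'v set \<Rightarrow> 'v set \<Rightarrow> bool" where
  "is_ideal scale br L I \<longleftrightarrow>
     I \<subseteq> L \<and> module.subspace scale I \<and>
     (\<forall>i\<in>I. \<forall>x\<in>L. br i x \<in> I \<and> br x i \<in> I)"

definition essential_ideal ::
  "('k::field \<Rightarrow> 'v::ab_group_add \<Rightarrow> 'v) \<Rightarrow> ('v \<Rightarrow> 'v \<Rightarrow> 'v) \<Rightarrow> 'v set \<Rightarrow> 'v set \<Rightarrow> bool" where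
  "essential_ideal scale br L I \<longleftrightarrow>
     is_ideal scale br L I \<and>
     (\<forall>J. is_ideal scale br L J \<and> J \<noteq> {0} \<longrightarrow> I \<inter> J \<noteq> {0})"

definition Ann :: "('v::zero \<Rightarrow> 'v \<Rightarrow> 'v) \<Rightarrow> 'v set \<Rightarrow> 'v set \<Rightarrow> 'v set" where
  "Ann br L H = {x \<in> L. \<forall>y\<in>H. br x y = 0 \<and> br y x = 0}"

inductive_set mult_alg ::
  "('k::field \<Rightarrow> 'v::ab_group_add \<Rightarrow> 'v) \<Rightarrow> ('v \<Rightarrow> 'v \<Rightarrow> 'v) \<Rightarrow> 'v set \<Rightarrow> ('v \<Rightarrow> 'v) set"
  for scale br L where
  R_op: "x \<in> L \<Longrightarrow> (\<lambda>u. br u x) \<in> mult_alg scale br L"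
| L_op: "x \<in> L \<Longrightarrow> (\<lambda>u. br x u) \<in> mult_alg scale br L"
| zero_op: "(\<lambda>u. 0) \<in> mult_alg scale br L"
| comp_op: "f \<in> mult_alg scale br L \<Longrightarrow> g \<in> mult_alg scale br L \<Longrightarrow> f \<circ> g \<in> mult_alg scale br L"
| add_op: "f \<in> mult_alg scale br L \<Longrightarrow> g \<in> mult_alg scale br L \<Longrightarrow> (\<lambda>u. f u + g u) \<in> mult_alg scale br L"
| smult_op: "f \<in> mult_alg scale br L \<Longrightarrow> (\<lambda>u. scale c (f u)) \<in> mult_alg scale br L"

definition gen_sub ::
  "('k::field \<Rightarrow> 'v::ab_group_add \<Rightarrow> 'v) \<Rightarrow> ('v \<Rightarrow> 'v \<Rightarrow> 'v) \<Rightarrow> 'v set \<Rightarrow> 'v \<Rightarrow> 'v set" where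
  "gen_sub scale br L q =
     {scale c q + (\<Sum>i<n. \<xi> i q) | c (n::nat) \<xi>. \<forall>i<n. \<xi> i \<in> mult_alg scale br L}"

definition colon ::
  "('k::field \<Rightarrow> 'v::ab_group_add \<Rightarrow> 'v) \<Rightarrow> ('v \<Rightarrow> 'v \<Rightarrow> 'v) \<Rightarrow> 'v set \<Rightarrow> 'v \<Rightarrow> 'v set" where
  "colon scale br L q =
     {x \<in> L. \<forall>u\<in>gen_sub scale br L q. br x u \<in> L \<and> br u x \<in> L}"

definition algebra_of_quotients ::
  "('k::field \<Rightarrow> 'v::ab_group_add \<Rightarrow> 'v) \<Rightarrow> ('v \<Rightarrow> 'v \<Rightarrow> 'v) \<Rightarrow> 'v set \<Rightarrow> bool" where
  "algebra_of_quotients scale br L \<longleftrightarrow>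
     (\<forall>p q. p \<noteq> 0 \<longrightarrow>
        (\<exists>x\<in>colon scale br L q. br x p \<noteq> 0) \<or> (\<exists>y\<in>colon scale br L q. br p y \<noteq> 0))"

definition ideally_absorbed ::
  "('k::field \<Rightarrow> 'v::ab_group_add \<Rightarrow> 'v) \<Rightarrow> ('v \<Rightarrow> 'v \<Rightarrow> 'v) \<Rightarrow> 'v set \<Rightarrow> bool" where
  "ideally_absorbed scale br L \<longleftrightarrow>
     (\<forall>q. q \<noteq> 0 \<longrightarrow>
        (\<exists>I. is_ideal scale br L I \<and> Ann br L I = {0} \<and>
             ((\<lambda>i. br i q) ` I \<noteq> {0} \<or> (\<lambda>i. br q i) ` I \<noteq> {0}) \<and>
             (\<lambda>i. br i q) ` I \<subseteq> L \<and> (\<lambda>i. br q i) ` I \<subseteq> L))"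

end

theory Submission
  imports Defs
begin

locale rla =
  fixes scale :: "'k::field \<Rightarrow> 'v::ab_group_add \<Rightarrow> 'v"
    and br :: "'v \<Rightarrow> 'v \<Rightarrow> 'v"
    and L :: "'v set"
  assumes RL: "right_leibniz_algebra scale br"
    and SA: "subalgebra scale br L"
begin

lemma vs: "vector_space scale" using RL by (simp add: right_leibniz_algebra_def)

sublocale m: module scale
  using vs by (simp add: vector_space_def module_def)

lemma addl: "br (x + y) z = br x z + br y z" using RL by (simp add: right_leibniz_algebra_def)
lemma addr: "br x (y + z) = br x y + br x z" using RL by (simp add: right_leibniz_algebra_def)
lemma scl: "br (scale c x) y = scale c (br x y)" using RL by (simp add: right_leibniz_algebra_def)
lemma scr: "br x (scale c y) = scale c (br x y)" using RL by (simp add: right_leibniz_algebra_def)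
lemma leib: "br x (br y z) = br (br x y) z - br (br x z) y" using RL by (simp add: right_leibniz_algebra_def)

lemma zl[simp]: "br 0 y = 0"
  using addl[of 0 0 y] by simp
lemma zr[simp]: "br y 0 = 0"
  using addr[of y 0 0] by simp

lemma leib1: "br (br x y) z = br x (br y z) + br (br x z) y"
  using leib[of x y z] by (simp add: algebra_simps)
lemma leib2: "br u (br x y) = br (br u x) y - br (br u y) x"
  by (rule leib)

lemma subL: "m.subspace L" using SA by (simp add: subalgebra_def)
lemma brL: "x \<in> L \<Longrightarrow> y \<in> L \<Longrightarrow> br x y \<in> L" using SA by (simp add: subalgebra_def)
lemma zL: "0 \<in> L" using subL m.subspace_0 by blast
lemma addL: "x \<in> L \<Longrightarrow> y \<in> L \<Longrightarrow> x + y \<in> L" using subL m.subspace_add by blast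
lemma diffL: "x \<in> L \<Longrightarrow> y \<in> L \<Longrightarrow> x - y \<in> L" using subL m.subspace_diff by blast
lemma scL: "x \<in> L \<Longrightarrow> scale c x \<in> L" using subL m.subspace_scale by blast

lemma ma_linear:
  assumes "\<xi> \<in> mult_alg scale br L"
  shows "(\<forall>a b. \<xi> (a + b) = \<xi> a + \<xi> b) \<and> (\<forall>c a. \<xi> (scale c a) = scale c (\<xi> a))"
  using assms
proof induction
  case (R_op x) then show ?case by (simp add: addl scl)
next
  case (L_op x) then show ?case by (simp add: addr scr)
next
  case zero_op then show ?case by simp
next
  case (comp_op f g) then show ?case by simp
next
  case (add_op f g) then show ?case by (simp add: algebra_simps m.scale_right_distrib)
next
  case (smult_op f c) then show ?case by (simp add: m.scale_right_distrib mult.commute)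
qed

lemma ma_zero: "\<xi> \<in> mult_alg scale br L \<Longrightarrow> \<xi> 0 = 0"
  using ma_linear[of \<xi>] by (metis add_cancel_right_right add_0)

lemma ma_sum:
  assumes "\<xi> \<in> mult_alg scale br L"
  shows "\<xi> (\<Sum>i<(n::nat). f i) = (\<Sum>i<n. \<xi> (f i))"
  by (induct n) (simp_all add: ma_zero[OF assms] ma_linear[OF assms])

lemma gen_sub_closed:
  assumes "\<psi> \<in> mult_alg scale br L" "u \<in> gen_sub scale br L q"
  shows "\<psi> u \<in> gen_sub scale br L q"
proof -
  obtain c n \<xi> where u: "u = scale c q + (\<Sum>i<(n::nat). \<xi> i q)" and xi: "\<forall>i<n. \<xi> i \<in> mult_alg scale br L"
    using assms(2) unfolding gen_sub_def by blast
  define \<eta> where "\<eta> = (\<lambda>i. if i < n then \<psi> \<circ> \<xi> i else (\<lambda>u. scale c (\<psi> u)))"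
  have eta: "\<forall>i<Suc n. \<eta> i \<in> mult_alg scale br L"
    using xi assms(1) by (auto simp: \<eta>_def intro: mult_alg.intros)
  have "\<psi> u = scale c (\<psi> q) + (\<Sum>i<n. \<psi> (\<xi> i q))"
    using ma_linear[OF assms(1)] ma_sum[OF assms(1)] u by simp
  also have "\<dots> = scale 0 q + (\<Sum>i<Suc n. \<eta> i q)"
    by (simp add: \<eta>_def)
  finally show ?thesis unfolding gen_sub_def using eta by blast
qed

lemma R_gen: "y \<in> L \<Longrightarrow> u \<in> gen_sub scale br L q \<Longrightarrow> br u y \<in> gen_sub scale br L q"
  using gen_sub_closed[OF mult_alg.R_op] by blast
lemma L_gen: "y \<in> L \<Longrightarrow> u \<in> gen_sub scale br L q \<Longrightarrow> br y u \<in> gen_sub scale br L q"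
  using gen_sub_closed[OF mult_alg.L_op] by blast

lemma colon_ideal: "is_ideal scale br L (colon scale br L q)"
proof -
  let ?C = "colon scale br L q"
  have sub: "m.subspace ?C"
  proof (rule m.subspaceI)
    show "0 \<in> ?C" by (simp add: colon_def zL)
    show "x + y \<in> ?C" if "x \<in> ?C" "y \<in> ?C" for x y
      using that unfolding colon_def by (auto simp only: addl addr intro!: addL)
    show "scale c x \<in> ?C" if "x \<in> ?C" for c x
      using that unfolding colon_def by (auto simp only: scl scr intro!: scL)
  qed
  have cl: "br x y \<in> ?C \<and> br y x \<in> ?C" if x: "x \<in> ?C" and y: "y \<in> L" for x y
  proof -
    have xL: "x \<in> L" and xu: "\<And>u. u \<in> gen_sub scale br L q \<Longrightarrow> br x u \<in> L \<and> br u x \<in> L"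
      using x unfolding colon_def by blast+
    have "br (br x y) u \<in> L \<and> br u (br x y) \<in> L \<and> br (br y x) u \<in> L \<and> br u (br y x) \<in> L"
      if u: "u \<in> gen_sub scale br L q" for u
    proof -
      have a: "br x u \<in> L" "br u x \<in> L" using xu[OF u] by auto
      have b: "br x (br y u) \<in> L" "br (br u y) x \<in> L"
        using xu L_gen[OF y u] R_gen[OF y u] by auto
      have c: "br (br y u) x \<in> L" using L_gen[OF y u] xu by blast
      have "br (br x y) u \<in> L" unfolding leib1[of x y u] by (rule addL[OF b(1) brL[OF a(1) y]])
      moreover have "br u (br x y) \<in> L" unfolding leib2[of u x y] by (rule diffL[OF brL[OF a(2) y] b(2)])
      moreover have "br (br y x) u \<in> L" unfolding leib1[of y x u] by (rule addL[OF brL[OF y a(1)] c])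
      moreover have "br u (br y x) \<in> L" unfolding leib2[of u y x] by (rule diffL[OF b(2) brL[OF a(2) y]])
      ultimately show ?thesis by blast
    qed
    then show ?thesis using brL[OF xL y] brL[OF y xL] unfolding colon_def by blast
  qed
  have "?C \<subseteq> L" unfolding colon_def by blast
  then show ?thesis unfolding is_ideal_def using sub cl by blast
qed

lemma ann_zero_essential:
  assumes I: "is_ideal scale br L I" and A: "Ann br L I = {0}"
  shows "essential_ideal scale br L I"
  unfolding essential_ideal_def
proof (intro conjI allI impI)
  show "is_ideal scale br L I" by fact
  fix J assume J: "is_ideal scale br L J \<and> J \<noteq> {0}"
  show "I \<inter> J \<noteq> {0}"
  proof
    assume IJ: "I \<inter> J = {0}"
    have "J \<subseteq> Ann br L I"
    proof
      fix x assume x: "x \<in> J"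
      have xL: "x \<in> L" using J x unfolding is_ideal_def by blast+
      have "br x y = 0 \<and> br y x = 0" if y: "y \<in> I" for y
      proof -
        have yL: "y \<in> L" using I y unfolding is_ideal_def by blast+
        have "br x y \<in> I" "br y x \<in> I" using I y xL unfolding is_ideal_def by blast+
        moreover have "br x y \<in> J" "br y x \<in> J" using J x yL unfolding is_ideal_def by blast+
        ultimately show ?thesis using IJ by blast
      qed
      then show "x \<in> Ann br L I" using xL by (simp add: Ann_def)
    qed
    then have "J \<subseteq> {0}" using A by simp
    moreover have "0 \<in> J" using J m.subspace_0 unfolding is_ideal_def by blast+
    ultimately show False using J by blast
  qed
qed

lemma zero_Ann: "0 \<in> Ann br L H"
  by (simp add: Ann_def zL)

lemma part1:
  assumes "algebra_of_quotients scale br L"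
  shows "Ann br L (colon scale br L q) = {0}"
proof -
  have "x = 0" if x: "x \<in> Ann br L (colon scale br L q)" for x
  proof (rule ccontr)
    assume "x \<noteq> 0"
    then show False using assms x unfolding algebra_of_quotients_def Ann_def by blast
  qed
  then show ?thesis using zero_Ann by blast
qed

definition SI :: "'v set \<Rightarrow> 'v set" where
  "SI I = {u. \<forall>i\<in>I. br i u \<in> L \<and> br u i \<in> L}"

lemma SI_add: "a \<in> SI I \<Longrightarrow> b \<in> SI I \<Longrightarrow> a + b \<in> SI I"
  unfolding SI_def by (simp add: addl addr addL)
lemma SI_scale: "a \<in> SI I \<Longrightarrow> scale c a \<in> SI I"
  unfolding SI_def by (simp add: scl scr scL)
lemma SI_zero: "0 \<in> SI I"
  unfolding SI_def by (simp add: zL)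

lemma SI_closed:
  assumes I: "is_ideal scale br L I" and \<xi>: "\<xi> \<in> mult_alg scale br L"
  shows "\<forall>u\<in>SI I. \<xi> u \<in> SI I"
  using \<xi>
proof induction
  case (R_op y)
  show ?case
  proof (intro ballI, unfold SI_def, intro CollectI ballI)
    fix u i assume u: "u \<in> {u. \<forall>i\<in>I. br i u \<in> L \<and> br u i \<in> L}" and i: "i \<in> I"
    have iy: "br i y \<in> I" "br y i \<in> I" using I i R_op unfolding is_ideal_def by blast+
    have f: "br (br i y) u \<in> L" "br i u \<in> L" "br u i \<in> L" "br u (br y i) \<in> L"
      using u i iy by auto
    show "br i (br u y) \<in> L \<and> br (br u y) i \<in> L"
      unfolding leib1[of u y i] leib2[of i u y]
      using diffL[OF brL[OF f(2) R_op] f(1)] addL[OF f(4) brL[OF f(3) R_op]] by blast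
  qed
next
  case (L_op y)
  show ?case
  proof (intro ballI, unfold SI_def, intro CollectI ballI)
    fix u i assume u: "u \<in> {u. \<forall>i\<in>I. br i u \<in> L \<and> br u i \<in> L}" and i: "i \<in> I"
    have iy: "br i y \<in> I" "br y i \<in> I" using I i L_op unfolding is_ideal_def by blast+
    have f: "br (br i y) u \<in> L" "br i u \<in> L" "br u i \<in> L" "br (br y i) u \<in> L"
      using u i iy by auto
    show "br i (br y u) \<in> L \<and> br (br y u) i \<in> L"
      unfolding leib1[of y u i] leib2[of i y u]
      using diffL[OF f(1) brL[OF f(2) L_op]] addL[OF brL[OF L_op f(3)] f(4)] by blast
  qed
next
  case zero_op then show ?case by (simp add: SI_zero)
next
  case (comp_op f g) then show ?case by simp
next
  case (add_op f g) then show ?case by (simp add: SI_add)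
next
  case (smult_op f c) then show ?case by (simp add: SI_scale)
qed

lemma SI_colon:
  assumes I: "is_ideal scale br L I" and q: "q \<in> SI I"
  shows "I \<subseteq> colon scale br L q"
proof -
  have "u \<in> SI I" if u: "u \<in> gen_sub scale br L q" for u
  proof -
    obtain c n \<xi> where u: "u = scale c q + (\<Sum>i<(n::nat). \<xi> i q)" and xi: "\<forall>i<n. \<xi> i \<in> mult_alg scale br L"
      using u unfolding gen_sub_def by blast
    have sc: "scale c q \<in> SI I" using q by (rule SI_scale)
    have "(\<Sum>i<m. \<xi> i q) \<in> SI I" if "m \<le> n" for m
      using that
    proof (induction m)
      case 0 then show ?case by (simp add: SI_zero)
    next
      case (Suc m)
      have "\<xi> m q \<in> SI I" using SI_closed[OF I] xi Suc q by auto
      then show ?case using Suc by (simp add: SI_add)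
    qed
    then show ?thesis using sc u SI_add by blast
  qed
  moreover have "I \<subseteq> L" using I unfolding is_ideal_def by blast+
  ultimately show ?thesis unfolding colon_def SI_def by blast
qed

lemma part2:
  assumes "ideally_absorbed scale br L"
  shows "Ann br L (colon scale br L q) = {0}"
proof (cases "\<exists>v::'v. v \<noteq> 0")
  case False
  then have all: "\<And>x::'v. x = 0" by simp
  show ?thesis
  proof (rule set_eqI)
    fix x show "x \<in> Ann br L (colon scale br L q) \<longleftrightarrow> x \<in> {0}"
      using zero_Ann[of "colon scale br L q"] by (simp add: all[of x])
  qed
next
  case True
  note ex = True
  define v where "v = (if q \<noteq> 0 then q else (SOME v. v \<noteq> 0))"
  have v1: "v \<noteq> 0"
  proof (cases "q = 0")
    case True
    then have "v = (SOME v. v \<noteq> 0)" unfolding v_def by simp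
    then show ?thesis using someI_ex[OF ex] by simp
  next
    case False
    then show ?thesis unfolding v_def by simp
  qed
  have v2: "q \<noteq> 0 \<Longrightarrow> v = q" unfolding v_def by simp
  have AQ: "\<forall>q. q \<noteq> 0 \<longrightarrow>
        (\<exists>I. is_ideal scale br L I \<and> Ann br L I = {0} \<and>
             ((\<lambda>i. br i q) ` I \<noteq> {0} \<or> (\<lambda>i. br q i) ` I \<noteq> {0}) \<and>
             (\<lambda>i. br i q) ` I \<subseteq> L \<and> (\<lambda>i. br q i) ` I \<subseteq> L)"
    using assms unfolding ideally_absorbed_def .
  have "\<exists>I. is_ideal scale br L I \<and> Ann br L I = {0} \<and>
             ((\<lambda>i. br i v) ` I \<noteq> {0} \<or> (\<lambda>i. br v i) ` I \<noteq> {0}) \<and>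
             (\<lambda>i. br i v) ` I \<subseteq> L \<and> (\<lambda>i. br v i) ` I \<subseteq> L"
    using mp[OF spec[OF AQ, of v] v1] .
  then obtain I where I: "is_ideal scale br L I" "Ann br L I = {0}"
    and vI: "(\<lambda>i. br i v) ` I \<subseteq> L" "(\<lambda>i. br v i) ` I \<subseteq> L"
    by (elim exE conjE) simp
  have "q \<in> SI I"
  proof (cases "q = 0")
    case True then show ?thesis by (simp add: SI_zero)
  next
    case False then have vq: "v = q" by (rule v2)
    have "\<forall>i\<in>I. br i q \<in> L \<and> br q i \<in> L"
      using vI unfolding vq image_subset_iff by simp
    then show ?thesis unfolding SI_def by simp
  qed
  then have "I \<subseteq> colon scale br L q" by (rule SI_colon[OF I(1)])
  then have sub: "Ann br L (colon scale br L q) \<subseteq> Ann br L I" unfolding Ann_def by blast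
  show ?thesis
  proof (rule subset_antisym)
    show "Ann br L (colon scale br L q) \<subseteq> {0}" using sub I(2) by simp
    show "{0} \<subseteq> Ann br L (colon scale br L q)" using zero_Ann by simp
  qed
qed

end

theorem proposition3p8:
  fixes scale :: "'k::field \<Rightarrow> 'v::ab_group_add \<Rightarrow> 'v"
    and br :: "'v \<Rightarrow> 'v \<Rightarrow> 'v"
    and L :: "'v set" and q :: 'v
  assumes "right_leibniz_algebra scale br"
    and "subalgebra scale br L"
  shows "(algebra_of_quotients scale br L \<longrightarrow>
            essential_ideal scale br L (colon scale br L q) \<and> Ann br L (colon scale br L q) = {0})
       \<and> (ideally_absorbed scale br L \<longrightarrow>
            essential_ideal scale br L (colon scale br L q) \<and> Ann br L (colon scale br L q) = {0})"
proof -
  interpret rla scale br L by (rule rla.intro[OF assms])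
  have E: "Ann br L (colon scale br L q) = {0} \<Longrightarrow> essential_ideal scale br L (colon scale br L q)"
    by (rule ann_zero_essential[OF colon_ideal])
  have P1: "algebra_of_quotients scale br L \<Longrightarrow> Ann br L (colon scale br L q) = {0}" by (rule part1)
  have P2: "ideally_absorbed scale br L \<Longrightarrow> Ann br L (colon scale br L q) = {0}" by (rule part2)
  show ?thesis
  proof (intro conjI impI)
    assume h: "algebra_of_quotients scale br L"
    show "essential_ideal scale br L (colon scale br L q)" by (rule E[OF P1[OF h]])
    show "Ann br L (colon scale br L q) = {0}" by (rule P1[OF h])
  next
    assume h: "ideally_absorbed scale br L"
    show "essential_ideal scale br L (colon scale br L q)" by (rule E[OF P2[OF h]])
    show "Ann br L (colon scale br L q) = {0}" by (rule P2[OF h])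
  qed
qed

end
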